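(* Let $(\mathcal M,g)$ be a Riemannian manifold, $U\subset\mathcal M$ geodesically convex (so $\log_x$ is defined on $U$ for $x\in U$), and $\psi:U\to\Omega\subset\mathbb R^d$ a smooth chart that is an affine-cut chart: for every $x\in U$ and every nonzero $w\in T_x\mathcal M$ there are $a_{x,w}\in\mathbb R^d\setminus\{0\}$ and $\beta_{x,w}\in\mathbb R$ with \[ \{y\in U:\langle w,\log_x(y)\rangle_x=0\}=\{y\in U:a_{x,w}^{\mathsf T}\psi(y)=\beta_{x,w}\}. \] Then for every $x\in U$ and nonzero $v\in T_x\mathcal M$, the curve $t\mapsto\psi(\exp_x(tv))$ is, for $|t|$ sufficiently small, contained in the Euclidean affine line through $\psi(x)$ with direction $D\psi_x v$.
   Context: $\exp_x,\log_x$ denote the Riemannian exponential and logarithm maps and $\langle\cdot,\cdot\rangle_x$ the Riemannian inner product on $T_x\mathcal M$; $d=\dim\mathcal M$. *)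

theory Defs
  imports "HOL-Analysis.Analysis"
begin

text \<open>Everything is expressed in the coordinates of the chart psi : U -> Omega.
  Points of U are identified with points of Omega (a subset of real^'n, d = CARD('n)),
  tangent vectors with coordinate vectors (so D psi_x v is the coordinate vector v),
  and the Riemannian metric with its coordinate matrix field G.\<close>

fun Ck_on :: "nat \<Rightarrow> 'a::euclidean_space set \<Rightarrow> ('a \<Rightarrow> 'b::real_normed_vector) \<Rightarrow> bool" where
  "Ck_on 0 S f = continuous_on S f"
| "Ck_on (Suc k) S f =
     (f differentiable_on S \<and> (\<forall>i\<in>Basis. Ck_on k S (\<lambda>x. frechet_derivative f (at x) i)))"

definition C_inf_on :: "'a::euclidean_space set \<Rightarrow> ('a \<Rightarrow> 'b::real_normed_vector) \<Rightarrow> bool" where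
  "C_inf_on S f \<longleftrightarrow> (\<forall>k. Ck_on k S f)"

definition riemannian_metric :: "(real^'n) set \<Rightarrow> (real^'n \<Rightarrow> real^'n^'n) \<Rightarrow> bool" where
  "riemannian_metric \<Omega> G \<longleftrightarrow> open \<Omega> \<and> C_inf_on \<Omega> G \<and>
     (\<forall>p\<in>\<Omega>. transpose (G p) = G p \<and> (\<forall>u. u \<noteq> 0 \<longrightarrow> u \<bullet> (G p *v u) > 0))"

definition rinner :: "(real^'n \<Rightarrow> real^'n^'n) \<Rightarrow> real^'n \<Rightarrow> real^'n \<Rightarrow> real^'n \<Rightarrow> real" where
  "rinner G p u w = u \<bullet> (G p *v w)"

definition dmetric :: "(real^'n \<Rightarrow> real^'n^'n) \<Rightarrow> real^'n \<Rightarrow> 'n \<Rightarrow> real^'n^'n" where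
  "dmetric G p i = frechet_derivative G (at p) (axis i 1)"

definition christoffel :: "(real^'n \<Rightarrow> real^'n^'n) \<Rightarrow> real^'n \<Rightarrow> 'n \<Rightarrow> 'n \<Rightarrow> 'n \<Rightarrow> real" where
  "christoffel G p k i j =
     (1/2) * (\<Sum>l\<in>UNIV. matrix_inv (G p) $ k $ l *
        (dmetric G p i $ j $ l + dmetric G p j $ i $ l - dmetric G p l $ i $ j))"

definition geodesic_on ::
  "(real^'n) set \<Rightarrow> (real^'n \<Rightarrow> real^'n^'n) \<Rightarrow> real set \<Rightarrow> (real \<Rightarrow> real^'n) \<Rightarrow> (real \<Rightarrow> real^'n) \<Rightarrow> bool" where
  "geodesic_on \<Omega> G I \<gamma> \<gamma>' \<longleftrightarrow>
     (\<forall>t\<in>I. \<gamma> t \<in> \<Omega> \<and> (\<gamma> has_vector_derivative \<gamma>' t) (at t within I) \<and>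
        (\<exists>acc. (\<gamma>' has_vector_derivative acc) (at t within I) \<and>
           (\<forall>k. acc $ k + (\<Sum>i\<in>UNIV. \<Sum>j\<in>UNIV. christoffel G (\<gamma> t) k i j * \<gamma>' t $ i * \<gamma>' t $ j) = 0)))"

definition geodesic_segment ::
  "(real^'n) set \<Rightarrow> (real^'n \<Rightarrow> real^'n^'n) \<Rightarrow> real^'n \<Rightarrow> real^'n \<Rightarrow> real^'n \<Rightarrow> bool" where
  "geodesic_segment \<Omega> G p v q \<longleftrightarrow>
     (\<exists>\<gamma> \<gamma>'. geodesic_on \<Omega> G {0..1} \<gamma> \<gamma>' \<and> \<gamma> 0 = p \<and> \<gamma>' 0 = v \<and> \<gamma> 1 = q)"

definition rexp :: "(real^'n) set \<Rightarrow> (real^'n \<Rightarrow> real^'n^'n) \<Rightarrow> real^'n \<Rightarrow> real^'n \<Rightarrow> real^'n" where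
  "rexp \<Omega> G p v = (THE q. geodesic_segment \<Omega> G p v q)"

definition rlog :: "(real^'n) set \<Rightarrow> (real^'n \<Rightarrow> real^'n^'n) \<Rightarrow> real^'n \<Rightarrow> real^'n \<Rightarrow> real^'n" where
  "rlog \<Omega> G p q = (THE v. geodesic_segment \<Omega> G p v q)"

definition geodesically_convex :: "(real^'n) set \<Rightarrow> (real^'n \<Rightarrow> real^'n^'n) \<Rightarrow> bool" where
  "geodesically_convex \<Omega> G \<longleftrightarrow> (\<forall>p\<in>\<Omega>. \<forall>q\<in>\<Omega>. \<exists>!v. geodesic_segment \<Omega> G p v q)"

definition affine_cut :: "(real^'n) set \<Rightarrow> (real^'n \<Rightarrow> real^'n^'n) \<Rightarrow> bool" where
  "affine_cut \<Omega> G \<longleftrightarrow>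
     (\<forall>p\<in>\<Omega>. \<forall>w. w \<noteq> 0 \<longrightarrow> (\<exists>a \<beta>. a \<noteq> 0 \<and>
        {q\<in>\<Omega>. rinner G p w (rlog \<Omega> G p q) = 0} = {q\<in>\<Omega>. a \<bullet> q = \<beta>}))"

end

theory Submission
  imports Defs
begin


lemma geo_scale:
  assumes g: "geodesic_on \<Omega> G {0..1} \<gamma> \<gamma>'" and s: "0 \<le> s" "s \<le> 1"
  shows "geodesic_on \<Omega> G {0..1} (\<lambda>\<tau>. \<gamma> (s*\<tau>)) (\<lambda>\<tau>. s *\<^sub>R \<gamma>' (s*\<tau>))"
  unfolding geodesic_on_def
proof
  fix t :: real assume t: "t \<in> {0..1}"
  have st: "s*t \<in> {0..1}" using t s by (auto simp: mult_le_one)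
  have img: "(\<lambda>\<tau>. s*\<tau>) ` {0..1} \<subseteq> {0..1}" using s by (auto simp: mult_le_one)
  have dl: "((\<lambda>\<tau>. s*\<tau>) has_vector_derivative s) (at t within {0..1})"
    by (auto intro!: derivative_eq_intros simp: has_real_derivative_iff_has_vector_derivative[symmetric])
  from g st obtain acc where g1: "\<gamma> (s*t) \<in> \<Omega>"
     and g2: "(\<gamma> has_vector_derivative \<gamma>' (s*t)) (at (s*t) within {0..1})"
     and g3: "(\<gamma>' has_vector_derivative acc) (at (s*t) within {0..1})"
     and g4: "\<forall>k. acc $ k + (\<Sum>i\<in>UNIV. \<Sum>j\<in>UNIV. christoffel G (\<gamma> (s*t)) k i j * \<gamma>' (s*t) $ i * \<gamma>' (s*t) $ j) = 0"
    unfolding geodesic_on_def by blast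
  have d1: "((\<lambda>\<tau>. \<gamma> (s*\<tau>)) has_vector_derivative s *\<^sub>R \<gamma>' (s*t)) (at t within {0..1})"
    using vector_diff_chain_within[OF dl has_vector_derivative_within_subset[OF g2 img]]
    by (simp add: o_def)
  have d2: "((\<lambda>\<tau>. \<gamma>' (s*\<tau>)) has_vector_derivative s *\<^sub>R acc) (at t within {0..1})"
    using vector_diff_chain_within[OF dl has_vector_derivative_within_subset[OF g3 img]]
    by (simp add: o_def)
  have d3: "((\<lambda>\<tau>. s *\<^sub>R \<gamma>' (s*\<tau>)) has_vector_derivative s *\<^sub>R (s *\<^sub>R acc)) (at t within {0..1})"
    using bounded_linear.has_vector_derivative[OF bounded_linear_scaleR_right d2] by simp
  have eq: "\<forall>k. (s *\<^sub>R (s *\<^sub>R acc)) $ k + (\<Sum>i\<in>UNIV. \<Sum>j\<in>UNIV. christoffel G (\<gamma> (s*t)) k i j * (s *\<^sub>R \<gamma>' (s*t)) $ i * (s *\<^sub>R \<gamma>' (s*t)) $ j) = 0"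
  proof
    fix k
    have "(s *\<^sub>R (s *\<^sub>R acc)) $ k + (\<Sum>i\<in>UNIV. \<Sum>j\<in>UNIV. christoffel G (\<gamma> (s*t)) k i j * (s *\<^sub>R \<gamma>' (s*t)) $ i * (s *\<^sub>R \<gamma>' (s*t)) $ j)
      = s * s * (acc $ k + (\<Sum>i\<in>UNIV. \<Sum>j\<in>UNIV. christoffel G (\<gamma> (s*t)) k i j * \<gamma>' (s*t) $ i * \<gamma>' (s*t) $ j))"
      by (simp add: sum_distrib_left algebra_simps)
    also have "\<dots> = 0" using g4 by simp
    finally show "(s *\<^sub>R (s *\<^sub>R acc)) $ k + (\<Sum>i\<in>UNIV. \<Sum>j\<in>UNIV. christoffel G (\<gamma> (s*t)) k i j * (s *\<^sub>R \<gamma>' (s*t)) $ i * (s *\<^sub>R \<gamma>' (s*t)) $ j) = 0" .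
  qed
  show "\<gamma> (s*t) \<in> \<Omega> \<and> ((\<lambda>\<tau>. \<gamma> (s*\<tau>)) has_vector_derivative s *\<^sub>R \<gamma>' (s*t)) (at t within {0..1}) \<and>
        (\<exists>acc. ((\<lambda>\<tau>. s *\<^sub>R \<gamma>' (s*\<tau>)) has_vector_derivative acc) (at t within {0..1}) \<and>
           (\<forall>k. acc $ k + (\<Sum>i\<in>UNIV. \<Sum>j\<in>UNIV. christoffel G (\<gamma> (s*t)) k i j * (s *\<^sub>R \<gamma>' (s*t)) $ i * (s *\<^sub>R \<gamma>' (s*t)) $ j) = 0))"
    using g1 d1 d3 eq by blast
qed



lemma LA:
  fixes a b :: "real^'n"
  assumes "a \<noteq> 0" "\<And>x. a \<bullet> x = 0 \<Longrightarrow> b \<bullet> x = 0"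
  shows "b = ((b \<bullet> a) / (a \<bullet> a)) *\<^sub>R a"
proof -
  define c where "c = (b \<bullet> a) / (a \<bullet> a)"
  have aa: "a \<bullet> a \<noteq> 0" using assms(1) by simp
  have "a \<bullet> (b - c *\<^sub>R a) = 0" using aa by (simp add: c_def inner_diff_right inner_commute)
  hence "b \<bullet> (b - c *\<^sub>R a) = 0" using assms(2) by blast
  hence "(b - c *\<^sub>R a) \<bullet> (b - c *\<^sub>R a) = 0"
    using \<open>a \<bullet> (b - c *\<^sub>R a) = 0\<close> by (simp add: inner_diff_left)
  hence "b - c *\<^sub>R a = 0" by (simp only: inner_eq_zero_iff)
  thus ?thesis unfolding c_def[symmetric] by simp
qed

lemma deriv_zero_on:
  fixes f :: "real \<Rightarrow> real"
  assumes "(f has_vector_derivative D) (at 0 within {0..1})" "\<And>s. s \<in> {0..1} \<Longrightarrow> f s = 0"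
  shows "D = 0"
proof -
  have "((\<lambda>_. 0::real) has_vector_derivative D) (at 0 within {0..1})"
    by (rule has_vector_derivative_transform_within[OF assms(1), of 1]) (auto simp: assms(2))
  moreover have "((\<lambda>_. 0::real) has_vector_derivative 0) (at 0 within {0..1})" by simp
  moreover have "at (0::real) within {0..1} \<noteq> bot" by (simp add: at_within_Icc_at_right)
  ultimately show ?thesis using vector_derivative_unique_within by blast
qed

lemma rho_deriv:
  fixes \<gamma> :: "real \<Rightarrow> real^'n"
  assumes "(\<gamma> has_vector_derivative u) (at 0 within {0..1})" "u \<noteq> 0"
  shows "((\<lambda>s. ((\<gamma> s - p) \<bullet> u) / (u \<bullet> u)) has_real_derivative 1) (at 0 within {0..1})"
proof -
  have d1: "((\<lambda>s. \<gamma> s - p) has_vector_derivative u) (at 0 within {0..1})"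
    using assms(1) by (simp add: has_vector_derivative_diff_const)
  have d2: "((\<lambda>s. (\<gamma> s - p) \<bullet> u) has_vector_derivative u \<bullet> u) (at 0 within {0..1})"
    by (rule bounded_linear.has_vector_derivative[OF bounded_linear_inner_left d1])
  have d3: "((\<lambda>s. ((\<gamma> s - p) \<bullet> u) / (u \<bullet> u)) has_vector_derivative (u \<bullet> u) / (u \<bullet> u)) (at 0 within {0..1})"
    by (rule bounded_linear.has_vector_derivative[OF bounded_linear_divide d2])
  have "(u \<bullet> u) / (u \<bullet> u) = 1" using assms(2) by simp
  thus ?thesis using d3 by (simp add: has_real_derivative_iff_has_vector_derivative)
qed

lemma scale_inv:
  fixes x y :: "real^'n"
  assumes "c \<noteq> 0" "x = c *\<^sub>R y"
  shows "y = (1 / c) *\<^sub>R x"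
  using assms by simp

context
  fixes \<Omega> :: "(real^'n) set" and G :: "real^'n \<Rightarrow> real^'n^'n" and p :: "real^'n"
  assumes rm: "riemannian_metric \<Omega> G"
    and gc: "geodesically_convex \<Omega> G"
    and ac: "affine_cut \<Omega> G"
    and pO: "p \<in> \<Omega>"
begin

lemma seg_scale:
  assumes "geodesic_on \<Omega> G {0..1} \<gamma> \<gamma>'" "\<gamma> 0 = p" "\<gamma>' 0 = u" "0 \<le> s" "s \<le> 1"
  shows "geodesic_segment \<Omega> G p (s *\<^sub>R u) (\<gamma> s)"
proof -
  have "geodesic_on \<Omega> G {0..1} (\<lambda>\<tau>. \<gamma> (s*\<tau>)) (\<lambda>\<tau>. s *\<^sub>R \<gamma>' (s*\<tau>)) \<and> (\<lambda>\<tau>. \<gamma> (s*\<tau>)) 0 = p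
     \<and> (\<lambda>\<tau>. s *\<^sub>R \<gamma>' (s*\<tau>)) 0 = s *\<^sub>R u \<and> (\<lambda>\<tau>. \<gamma> (s*\<tau>)) 1 = \<gamma> s"
    using geo_scale[OF assms(1) assms(4,5)] assms(2,3) by simp
  thus ?thesis unfolding geodesic_segment_def by blast
qed

lemma log_eq:
  assumes "q \<in> \<Omega>" "geodesic_segment \<Omega> G p u q"
  shows "rlog \<Omega> G p q = u"
proof -
  have "\<exists>!v. geodesic_segment \<Omega> G p v q" using gc pO assms(1) unfolding geodesically_convex_def by blast
  thus ?thesis unfolding rlog_def using assms(2) by (rule the1_equality)
qed

lemma seg_log:
  assumes "q \<in> \<Omega>"
  shows "geodesic_segment \<Omega> G p (rlog \<Omega> G p q) q"
proof -
  have "\<exists>!v. geodesic_segment \<Omega> G p v q" using gc pO assms(1) unfolding geodesically_convex_def by blast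
  thus ?thesis unfolding rlog_def by (rule theI')
qed

lemma curve:
  assumes "q \<in> \<Omega>"
  shows "\<exists>\<gamma>. \<gamma> 0 = p \<and> \<gamma> 1 = q \<and> continuous_on {0..1} \<gamma> \<and>
     (\<gamma> has_vector_derivative rlog \<Omega> G p q) (at 0 within {0..1}) \<and>
     (\<forall>s\<in>{0..1}. \<gamma> s \<in> \<Omega> \<and> rlog \<Omega> G p (\<gamma> s) = s *\<^sub>R rlog \<Omega> G p q)"
proof -
  obtain \<gamma> \<gamma>' where g: "geodesic_on \<Omega> G {0..1} \<gamma> \<gamma>'" "\<gamma> 0 = p" "\<gamma>' 0 = rlog \<Omega> G p q" "\<gamma> 1 = q"
    using seg_log[OF assms] unfolding geodesic_segment_def by blast
  have in\<Omega>: "\<gamma> s \<in> \<Omega>" if "s \<in> {0..1}" for s using g(1) that unfolding geodesic_on_def by blast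
  have der: "(\<gamma> has_vector_derivative \<gamma>' s) (at s within {0..1})" if "s \<in> {0..1}" for s
    using g(1) that unfolding geodesic_on_def by blast
  have cont: "continuous_on {0..1} \<gamma>"
    using der has_vector_derivative_continuous continuous_on_eq_continuous_within by blast
  have lg: "rlog \<Omega> G p (\<gamma> s) = s *\<^sub>R rlog \<Omega> G p q" if "s \<in> {0..1}" for s
    using log_eq[OF in\<Omega>[OF that] seg_scale[OF g(1,2,3)]] that by auto
  have "(\<gamma> has_vector_derivative rlog \<Omega> G p q) (at 0 within {0..1})" using der[of 0] g(3) by simp
  moreover have "\<forall>s\<in>{0..1}. \<gamma> s \<in> \<Omega> \<and> rlog \<Omega> G p (\<gamma> s) = s *\<^sub>R rlog \<Omega> G p q" using in\<Omega> lg by blast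
  ultimately show ?thesis using g(2,4) cont by (intro exI[of _ \<gamma>] conjI) assumption+
qed

lemma log_p: "rlog \<Omega> G p p = 0"
proof -
  obtain \<gamma> \<gamma>' where g: "geodesic_on \<Omega> G {0..1} \<gamma> \<gamma>'" "\<gamma> 0 = p" "\<gamma>' 0 = rlog \<Omega> G p p" "\<gamma> 1 = p"
    using seg_log[OF pO] unfolding geodesic_segment_def by blast
  have "geodesic_segment \<Omega> G p (0 *\<^sub>R rlog \<Omega> G p p) (\<gamma> 0)" by (rule seg_scale[OF g(1,2,3)]) simp_all
  hence "geodesic_segment \<Omega> G p 0 p" using g(2) by simp
  thus ?thesis using log_eq[OF pO] by blast
qed


lemma Mprops: "transpose (G p) = (G p) \<and> (\<forall>u. u \<noteq> 0 \<longrightarrow> u \<bullet> ((G p) *v u) > 0)"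
proof -
  have all: "\<forall>q\<in>\<Omega>. transpose (G q) = G q \<and> (\<forall>u. u \<noteq> 0 \<longrightarrow> u \<bullet> (G q *v u) > 0)"
    using rm unfolding riemannian_metric_def by (elim conjE)
  show ?thesis by (rule bspec[OF all pO])
qed

lemma rinner_eq: "rinner G p w x = ((G p) *v w) \<bullet> x"
proof -
  have tr: "transpose (G p) = (G p)" using Mprops by (rule conjunct1)
  have "w v* (G p) = transpose (G p) *v w" by (rule transpose_matrix_vector[symmetric])
  hence "((G p) *v w) = (w v* (G p))" by (simp only: tr)
  thus ?thesis unfolding rinner_def by (simp only: dot_lmul_matrix)
qed

lemma M_inj: "(G p) *v x = 0 \<Longrightarrow> x = 0"
proof (rule ccontr)
  assume "(G p) *v x = 0" "x \<noteq> 0"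
  hence "x \<bullet> ((G p) *v x) > 0" using Mprops by blast
  thus False using \<open>(G p) *v x = 0\<close> by simp
qed

lemma M_surj: "\<exists>y. (G p) *v y = a"
proof -
  have "\<exists>B. B ** (G p) = mat 1" using M_inj matrix_left_invertible_ker by blast
  hence "\<exists>B. (G p) ** B = mat 1" using matrix_left_right_inverse by blast
  hence "surj (\<lambda>x. (G p) *v x)" using matrix_right_invertible_surjective by blast
  thus ?thesis by (metis surjD)
qed

lemma ball_in: "\<exists>\<delta>>0. ball p \<delta> \<subseteq> \<Omega>"
  proof -
  have "open \<Omega>" using rm unfolding riemannian_metric_def by (elim conjE)
  thus ?thesis using pO by (simp add: open_contains_ball)
qed


lemma seg_in: "geodesic_segment \<Omega> G p u q \<Longrightarrow> q \<in> \<Omega>"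
  unfolding geodesic_segment_def geodesic_on_def by force

lemma affine:
  assumes "w \<noteq> 0"
  shows "\<exists>a. a \<noteq> 0 \<and> {q\<in>\<Omega>. rinner G p w (rlog \<Omega> G p q) = 0} = {q\<in>\<Omega>. a \<bullet> (q - p) = 0}"
proof -
  obtain a \<beta> where a: "a \<noteq> 0" and H: "{q\<in>\<Omega>. rinner G p w (rlog \<Omega> G p q) = 0} = {q\<in>\<Omega>. a \<bullet> q = \<beta>}"
    using ac pO assms unfolding affine_cut_def by blast
  have "p \<in> {q\<in>\<Omega>. rinner G p w (rlog \<Omega> G p q) = 0}" using pO log_p by (simp add: rinner_def)
  hence "a \<bullet> p = \<beta>" using H by blast
  hence "{q\<in>\<Omega>. a \<bullet> q = \<beta>} = {q\<in>\<Omega>. a \<bullet> (q - p) = 0}" by (auto simp: inner_diff_right)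
  thus ?thesis using a H by blast
qed

lemma stepA:
  assumes H: "{q\<in>\<Omega>. rinner G p w (rlog \<Omega> G p q) = 0} = {q\<in>\<Omega>. a \<bullet> (q - p) = 0}"
    and q: "q \<in> \<Omega>" and w: "rinner G p w (rlog \<Omega> G p q) = 0"
  shows "a \<bullet> rlog \<Omega> G p q = 0"
proof -
  obtain \<gamma> where g: "\<gamma> 0 = p" "(\<gamma> has_vector_derivative rlog \<Omega> G p q) (at 0 within {0..1})"
     "\<forall>s\<in>{0..1}. \<gamma> s \<in> \<Omega> \<and> rlog \<Omega> G p (\<gamma> s) = s *\<^sub>R rlog \<Omega> G p q"
    using curve[OF q] by blast
  have z: "a \<bullet> (\<gamma> s - p) = 0" if s: "s \<in> {0..1}" for s
  proof -
    have "rinner G p w (rlog \<Omega> G p (\<gamma> s)) = s * rinner G p w (rlog \<Omega> G p q)"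
      using g(3) s by (simp add: rinner_def matrix_vector_mult_scaleR)
    hence "\<gamma> s \<in> {q\<in>\<Omega>. rinner G p w (rlog \<Omega> G p q) = 0}" using w g(3) s by simp
    thus ?thesis using H by blast
  qed
  have d1: "((\<lambda>s. \<gamma> s - p) has_vector_derivative rlog \<Omega> G p q) (at 0 within {0..1})"
    using g(2) by (simp add: has_vector_derivative_diff_const)
  have d2: "((\<lambda>s. a \<bullet> (\<gamma> s - p)) has_vector_derivative a \<bullet> rlog \<Omega> G p q) (at 0 within {0..1})"
    by (rule bounded_linear.has_vector_derivative[OF bounded_linear_inner_right d1])
  show ?thesis using deriv_zero_on[OF d2] z by blast
qed

lemma stepC:
  assumes a1: "a1 \<noteq> 0" and a2: "a2 \<noteq> 0"
    and sub: "{q\<in>\<Omega>. a1 \<bullet> (q - p) = 0} \<subseteq> {q\<in>\<Omega>. a2 \<bullet> (q - p) = 0}"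
  shows "{q\<in>\<Omega>. a2 \<bullet> (q - p) = 0} \<subseteq> {q\<in>\<Omega>. a1 \<bullet> (q - p) = 0}"
proof -
  obtain \<delta> where d: "\<delta> > 0" "ball p \<delta> \<subseteq> \<Omega>" using ball_in by blast
  have imp: "a2 \<bullet> x = 0" if x: "a1 \<bullet> x = 0" for x
  proof (cases "x = 0")
    case True thus ?thesis by simp
  next
    case False
    define e where "e = \<delta> / (2 * norm x)"
    have e: "e > 0" using d False by (simp add: e_def)
    have "dist p (p + e *\<^sub>R x) = e * norm x" using e by (simp add: dist_norm)
    also have "\<dots> = \<delta> / 2" using False by (simp add: e_def)
    finally have "p + e *\<^sub>R x \<in> \<Omega>" using d by auto
    moreover have "a1 \<bullet> ((p + e *\<^sub>R x) - p) = 0" using x by simp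
    ultimately have "a2 \<bullet> ((p + e *\<^sub>R x) - p) = 0" using sub by blast
    thus ?thesis using e by simp
  qed
  have k: "a2 = ((a2 \<bullet> a1) / (a1 \<bullet> a1)) *\<^sub>R a1" by (rule LA[OF a1 imp])
  define k where "k = (a2 \<bullet> a1) / (a1 \<bullet> a1)"
  have "k \<noteq> 0" using k a2 unfolding k_def by (metis scale_zero_left)
  thus ?thesis using k unfolding k_def[symmetric] by auto
qed

lemma CL:
  assumes q: "q \<in> \<Omega>"
  shows "rinner G p w (rlog \<Omega> G p q) = 0 \<longleftrightarrow> rinner G p w (q - p) = 0"
proof (cases "w = 0")
  case True thus ?thesis by (simp add: rinner_def)
next
  case wne: False
  obtain a where a: "a \<noteq> 0" and H: "{q\<in>\<Omega>. rinner G p w (rlog \<Omega> G p q) = 0} = {q\<in>\<Omega>. a \<bullet> (q - p) = 0}"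
    using affine[OF wne] by blast
  obtain \<delta> where d: "\<delta> > 0" "ball p \<delta> \<subseteq> \<Omega>" using ball_in by blast
  have par: "\<exists>c. a = c *\<^sub>R (G p *v w)"
  proof (rule ccontr)
    assume nc: "\<not> (\<exists>c. a = c *\<^sub>R (G p *v w))"
    obtain w2 where w2: "G p *v w2 = a" using M_surj by blast
    have all: "rinner G p w (rlog \<Omega> G p q') = 0" if q': "q' \<in> \<Omega>" for q'
    proof -
      define u where "u = rlog \<Omega> G p q'"
      define \<alpha> where "\<alpha> = rinner G p w u"
      define b where "b = rinner G p w2 u"
      have bq: "rinner G p w2 x = a \<bullet> x" for x using w2 by (simp add: rinner_eq)
      define w' where "w' = b *\<^sub>R w - \<alpha> *\<^sub>R w2"
      have lin: "rinner G p w' x = b * rinner G p w x - \<alpha> * rinner G p w2 x" for x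
        unfolding w'_def rinner_def by (simp add: inner_diff_left)
      show ?thesis
      proof (cases "w' = 0")
        case True
        show ?thesis
        proof (rule ccontr)
          assume an: "rinner G p w (rlog \<Omega> G p q') \<noteq> 0"
          hence "\<alpha> \<noteq> 0" by (simp add: \<alpha>_def u_def)
          hence "w2 = (b / \<alpha>) *\<^sub>R w" using True unfolding w'_def
            by (metis (no_types, lifting) divide_inverse_commute eq_vector_fraction_iff right_minus_eq scaleR_scaleR)
          hence "a = (b / \<alpha>) *\<^sub>R (G p *v w)" using w2 by (simp add: matrix_vector_mult_scaleR)
          thus False using nc by blast
        qed
      next
        case False
        obtain a' where a': "a' \<noteq> 0" and H': "{q\<in>\<Omega>. rinner G p w' (rlog \<Omega> G p q) = 0} = {q\<in>\<Omega>. a' \<bullet> (q - p) = 0}"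
          using affine[OF False] by blast
        have "{q\<in>\<Omega>. a \<bullet> (q - p) = 0} \<subseteq> {q\<in>\<Omega>. a' \<bullet> (q - p) = 0}"
        proof
          fix x assume "x \<in> {q\<in>\<Omega>. a \<bullet> (q - p) = 0}"
          hence x: "x \<in> \<Omega>" "rinner G p w (rlog \<Omega> G p x) = 0" using H by blast+
          have "a \<bullet> rlog \<Omega> G p x = 0" by (rule stepA[OF H x])
          hence "rinner G p w' (rlog \<Omega> G p x) = 0" using x(2) lin bq by simp
          thus "x \<in> {q\<in>\<Omega>. a' \<bullet> (q - p) = 0}" using H' x(1) by blast
        qed
        hence sub: "{q\<in>\<Omega>. a' \<bullet> (q - p) = 0} \<subseteq> {q\<in>\<Omega>. a \<bullet> (q - p) = 0}" by (rule stepC[OF a a'])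
        have "rinner G p w' u = 0" using lin[of u] unfolding \<alpha>_def b_def by simp
        hence "q' \<in> {q\<in>\<Omega>. a' \<bullet> (q - p) = 0}" using H' q' unfolding u_def by blast
        hence "q' \<in> {q\<in>\<Omega>. a \<bullet> (q - p) = 0}" using sub by blast
        thus ?thesis using H by blast
      qed
    qed
    define e where "e = \<delta> / (2 * norm a)"
    have e: "e > 0" using d a by (simp add: e_def)
    have "dist p (p + e *\<^sub>R a) = e * norm a" using e by (simp add: dist_norm)
    also have "\<dots> = \<delta> / 2" using a by (simp add: e_def)
    finally have q0: "p + e *\<^sub>R a \<in> \<Omega>" using d by auto
    hence "p + e *\<^sub>R a \<in> {q\<in>\<Omega>. a \<bullet> (q - p) = 0}" using all H by blast
    hence "e * (a \<bullet> a) = 0" by simp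
    thus False using e a by simp
  qed
  then obtain c where c: "a = c *\<^sub>R (G p *v w)" by blast
  have "c \<noteq> 0" using a c by auto
  have "rinner G p w (rlog \<Omega> G p q) = 0 \<longleftrightarrow> a \<bullet> (q - p) = 0" using H q by blast
  also have "\<dots> \<longleftrightarrow> (G p *v w) \<bullet> (q - p) = 0" using c \<open>c \<noteq> 0\<close> by simp
  also have "\<dots> \<longleftrightarrow> rinner G p w (q - p) = 0" by (simp add: rinner_eq)
  finally show ?thesis .
qed


lemma P0:
  assumes q: "q \<in> \<Omega>" and z: "rlog \<Omega> G p q = 0"
  shows "q = p"
proof (rule ccontr)
  assume "q \<noteq> p"
  hence "(q - p) \<bullet> (G p *v (q - p)) > 0" using Mprops by simp
  moreover have "rinner G p (q - p) (rlog \<Omega> G p q) = 0" using z by (simp add: rinner_def)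
  hence "rinner G p (q - p) (q - p) = 0" using CL[OF q] by blast
  ultimately show False by (simp add: rinner_def)
qed

lemma P:
  assumes q: "q \<in> \<Omega>"
  shows "\<exists>c. rlog \<Omega> G p q = c *\<^sub>R (q - p)"
proof (cases "q = p")
  case True thus ?thesis using log_p by simp
next
  case False
  define a where "a = G p *v (q - p)"
  define b where "b = G p *v rlog \<Omega> G p q"
  have a: "a \<noteq> 0" using M_inj False unfolding a_def by force
  have imp: "b \<bullet> x = 0" if "a \<bullet> x = 0" for x
  proof -
    have "rinner G p x (q - p) = 0" using that by (simp add: rinner_def a_def inner_commute)
    hence "rinner G p x (rlog \<Omega> G p q) = 0" using CL[OF q] by blast
    thus ?thesis by (simp add: rinner_def b_def inner_commute)
  qed
  define k where "k = (b \<bullet> a) / (a \<bullet> a)"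
  have "b = k *\<^sub>R a" unfolding k_def by (rule LA[OF a imp])
  hence "G p *v (rlog \<Omega> G p q - k *\<^sub>R (q - p)) = 0"
    unfolding a_def b_def by (simp add: matrix_vector_mult_diff_distrib matrix_vector_mult_scaleR)
  hence "rlog \<Omega> G p q - k *\<^sub>R (q - p) = 0" by (rule M_inj)
  thus ?thesis by auto
qed

lemma Ppos:
  assumes q: "q \<in> \<Omega>"
  shows "\<exists>c>0. rlog \<Omega> G p q = c *\<^sub>R (q - p)"
proof (cases "q = p")
  case True thus ?thesis using log_p by (intro exI[of _ 1]) simp
next
  case False
  obtain c where c: "rlog \<Omega> G p q = c *\<^sub>R (q - p)" using P[OF q] by blast
  define u where "u = rlog \<Omega> G p q"
  have u: "u \<noteq> 0" using P0[OF q] False unfolding u_def by blast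
  have "c \<noteq> 0" using u c unfolding u_def by auto
  have "c > 0"
  proof (rule ccontr)
    assume "\<not> c > 0"
    hence cn: "c < 0" using \<open>c \<noteq> 0\<close> by simp
    obtain \<gamma> where g: "\<gamma> 0 = p" "\<gamma> 1 = q" "continuous_on {0..1} \<gamma>"
       "(\<gamma> has_vector_derivative u) (at 0 within {0..1})"
       "\<forall>s\<in>{0..1}. \<gamma> s \<in> \<Omega> \<and> rlog \<Omega> G p (\<gamma> s) = s *\<^sub>R u"
      using curve[OF q] unfolding u_def by blast
    define \<rho> where "\<rho> = (\<lambda>s. ((\<gamma> s - p) \<bullet> u) / (u \<bullet> u))"
    have nz: "\<rho> s \<noteq> 0" if s: "s \<in> {0<..1}" for s
    proof -
      have s01: "s \<in> {0..1}" using s by auto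
      obtain cs where cs: "rlog \<Omega> G p (\<gamma> s) = cs *\<^sub>R (\<gamma> s - p)" using P g(5) s01 by blast
      have su: "s *\<^sub>R u \<noteq> 0" using s u by auto
      hence "cs \<noteq> 0" using cs g(5) s01 by auto
      have "s *\<^sub>R u = cs *\<^sub>R (\<gamma> s - p)" using cs g(5) s01 by simp
      hence "\<gamma> s - p = (1 / cs) *\<^sub>R (s *\<^sub>R u)" by (rule scale_inv[OF \<open>cs \<noteq> 0\<close>])
      hence "\<gamma> s - p = (s / cs) *\<^sub>R u" by simp
      hence "\<rho> s = s / cs" using u unfolding \<rho>_def by simp
      thus ?thesis using s \<open>cs \<noteq> 0\<close> by simp
    qed
    have "q - p = (1 / c) *\<^sub>R u" using c \<open>c \<noteq> 0\<close> unfolding u_def by simp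
    hence r1: "\<rho> 1 = 1 / c" using g(2) u unfolding \<rho>_def by simp
    have cont: "continuous_on {0..1} \<rho>" unfolding \<rho>_def
      by (intro continuous_intros g(3)) (simp add: u)
    have der: "(\<rho> has_real_derivative 1) (at 0 within {0..1})"
      unfolding \<rho>_def by (rule rho_deriv[OF g(4) u])
    obtain d where d: "d > 0" "\<forall>h>0. 0 + h \<in> {0..1} \<longrightarrow> h < d \<longrightarrow> \<rho> 0 < \<rho> (0 + h)"
      using has_real_derivative_pos_inc_right[OF der] by auto
    define h where "h = min (d/2) 1"
    have h: "h > 0" "h \<le> 1" "h < d" using d by (auto simp: h_def)
    have "\<rho> 0 = 0" using g(1) unfolding \<rho>_def by simp
    hence ph: "\<rho> h > 0" using d h by auto
    have "continuous_on {h..1} \<rho>" by (rule continuous_on_subset[OF cont]) (use h in auto)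
    then obtain x where x: "h \<le> x" "x \<le> 1" "\<rho> x = 0"
      using IVT2'[of \<rho> 1 0 h] ph r1 cn h by auto
    thus False using nz[of x] h by auto
  qed
  thus ?thesis using c by blast
qed

lemma INJ_le:
  assumes q1: "q1 \<in> \<Omega>" and q2: "q2 \<in> \<Omega>" and l1: "rlog \<Omega> G p q1 = u" and l2: "rlog \<Omega> G p q2 = u"
    and u: "u \<noteq> 0" and r1: "q1 - p = r1 *\<^sub>R u" and r2: "q2 - p = r2 *\<^sub>R u" and le: "0 < r1" "r1 \<le> r2"
  shows "q1 = q2"
proof -
  obtain \<gamma> where g: "\<gamma> 0 = p" "\<gamma> 1 = q2" "continuous_on {0..1} \<gamma>"
     "\<forall>s\<in>{0..1}. \<gamma> s \<in> \<Omega> \<and> rlog \<Omega> G p (\<gamma> s) = s *\<^sub>R u"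
    using curve[OF q2] l2 by blast
  define \<rho> where "\<rho> = (\<lambda>s. ((\<gamma> s - p) \<bullet> u) / (u \<bullet> u))"
  have cont: "continuous_on {0..1} \<rho>" unfolding \<rho>_def by (intro continuous_intros g(3)) (simp add: u)
  have "\<rho> 0 = 0" using g(1) unfolding \<rho>_def by simp
  moreover have "\<rho> 1 = r2" using g(2) r2 u unfolding \<rho>_def by simp
  ultimately obtain s where s: "0 \<le> s" "s \<le> 1" "\<rho> s = r1"
    using IVT'[of \<rho> 0 r1 1] cont le by auto
  have s01: "s \<in> {0..1}" using s by auto
  obtain c where c: "c > 0" "rlog \<Omega> G p (\<gamma> s) = c *\<^sub>R (\<gamma> s - p)" using Ppos g(4) s01 by blast
  have "s *\<^sub>R u = c *\<^sub>R (\<gamma> s - p)" using c g(4) s01 by simp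
  moreover have cn0: "c \<noteq> 0" using c by simp
  ultimately have "\<gamma> s - p = (1 / c) *\<^sub>R (s *\<^sub>R u)" using scale_inv by blast
  hence "\<gamma> s - p = (s / c) *\<^sub>R u" by simp
  moreover hence "\<rho> s = s / c" using u unfolding \<rho>_def by simp
  ultimately have "\<gamma> s - p = r1 *\<^sub>R u" using s by simp
  hence "\<gamma> s - p = q1 - p" using r1 by simp
  hence gs: "\<gamma> s = q1" by simp
  hence "s *\<^sub>R u = u" using g(4) s01 l1 by metis
  hence "s = 1" using u by (metis scaleR_cancel_right scale_one)
  thus ?thesis using gs g(2) by simp
qed

lemma INJ:
  assumes q1: "q1 \<in> \<Omega>" and q2: "q2 \<in> \<Omega>" and l: "rlog \<Omega> G p q1 = rlog \<Omega> G p q2"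
  shows "q1 = q2"
proof (cases "rlog \<Omega> G p q1 = 0")
  case True thus ?thesis using P0 q1 q2 l by metis
next
  case False
  define u where "u = rlog \<Omega> G p q1"
  obtain c1 where c1: "c1 > 0" "u = c1 *\<^sub>R (q1 - p)" using Ppos[OF q1] unfolding u_def by blast
  obtain c2 where c2: "c2 > 0" "u = c2 *\<^sub>R (q2 - p)" using Ppos[OF q2] l unfolding u_def by auto
  have e1: "q1 - p = (1/c1) *\<^sub>R u" using c1 by simp
  have e2: "q2 - p = (1/c2) *\<^sub>R u" using c2 by simp
  have u: "u \<noteq> 0" using False u_def by simp
  have l1: "rlog \<Omega> G p q1 = u" and l2: "rlog \<Omega> G p q2 = u" using l u_def by auto
  show ?thesis
  proof (cases "1/c1 \<le> 1/c2")
    case True thus ?thesis using INJ_le[OF q1 q2 l1 l2 u e1 e2] c1 by simp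
  next
    case False thus ?thesis using INJ_le[OF q2 q1 l2 l1 u e2 e1] c2 by simp
  qed
qed

lemma exist_seg:
  assumes q: "q \<in> \<Omega>" and s: "0 \<le> s" "s \<le> 1"
  shows "\<exists>q'. q' \<in> \<Omega> \<and> geodesic_segment \<Omega> G p (s *\<^sub>R rlog \<Omega> G p q) q'"
proof -
  obtain \<gamma> \<gamma>' where g: "geodesic_on \<Omega> G {0..1} \<gamma> \<gamma>'" "\<gamma> 0 = p" "\<gamma>' 0 = rlog \<Omega> G p q"
    using seg_log[OF q] unfolding geodesic_segment_def by blast
  have "geodesic_segment \<Omega> G p (s *\<^sub>R rlog \<Omega> G p q) (\<gamma> s)" by (rule seg_scale[OF g s])
  thus ?thesis using seg_in by blast
qed

lemma main:
  assumes v: "v \<noteq> 0"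
  shows "\<exists>\<epsilon>>0. \<forall>t. \<bar>t\<bar> < \<epsilon> \<longrightarrow> (\<exists>s. rexp \<Omega> G p (t *\<^sub>R v) = p + s *\<^sub>R v)"
proof -
  obtain \<delta> where d: "\<delta> > 0" "ball p \<delta> \<subseteq> \<Omega>" using ball_in by blast
  define r where "r = \<delta> / (2 * norm v)"
  have r: "r > 0" using d v by (simp add: r_def)
  have "dist p (p + r *\<^sub>R v) = r * norm v" using r by (simp add: dist_norm)
  also have "\<dots> = \<delta> / 2" using v by (simp add: r_def)
  finally have qp: "p + r *\<^sub>R v \<in> \<Omega>" using d by auto
  have "dist p (p - r *\<^sub>R v) = r * norm v" using r by (simp add: dist_norm)
  also have "\<dots> = \<delta> / 2" using v by (simp add: r_def)
  finally have qm: "p - r *\<^sub>R v \<in> \<Omega>" using d by auto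
  obtain cp where cp: "cp > 0" "rlog \<Omega> G p (p + r *\<^sub>R v) = cp *\<^sub>R ((p + r *\<^sub>R v) - p)" using Ppos[OF qp] by blast
  obtain cm where cm: "cm > 0" "rlog \<Omega> G p (p - r *\<^sub>R v) = cm *\<^sub>R ((p - r *\<^sub>R v) - p)" using Ppos[OF qm] by blast
  define lp where "lp = cp * r"
  define lm where "lm = cm * r"
  have lp: "lp > 0" "rlog \<Omega> G p (p + r *\<^sub>R v) = lp *\<^sub>R v" using cp r by (auto simp: lp_def)
  have lm: "lm > 0" "rlog \<Omega> G p (p - r *\<^sub>R v) = (- lm) *\<^sub>R v" using cm r by (auto simp: lm_def)
  define \<epsilon> where "\<epsilon> = min lp lm"
  have "\<epsilon> > 0" using lp lm by (simp add: \<epsilon>_def)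
  moreover have "\<exists>s. rexp \<Omega> G p (t *\<^sub>R v) = p + s *\<^sub>R v" if t: "\<bar>t\<bar> < \<epsilon>" for t
  proof -
    have "\<exists>q'. q' \<in> \<Omega> \<and> geodesic_segment \<Omega> G p (t *\<^sub>R v) q'"
    proof (cases "t \<ge> 0")
      case True
      have s1: "t / lp \<le> 1" using t lp True by (simp add: \<epsilon>_def)
      have s0: "0 \<le> t / lp" using True lp by simp
      have "\<exists>q'. q' \<in> \<Omega> \<and> geodesic_segment \<Omega> G p ((t / lp) *\<^sub>R rlog \<Omega> G p (p + r *\<^sub>R v)) q'"
        using exist_seg[OF qp s0 s1] .
      thus ?thesis using lp by simp
    next
      case False
      have "- t < lm" using t False by (auto simp: \<epsilon>_def)
      hence s1: "(- t) / lm \<le> 1" using lm(1) by (simp add: field_simps)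
      have s0: "0 \<le> (- t) / lm" using False lm(1) by (intro divide_nonneg_pos) auto
      have "\<exists>q'. q' \<in> \<Omega> \<and> geodesic_segment \<Omega> G p (((- t) / lm) *\<^sub>R rlog \<Omega> G p (p - r *\<^sub>R v)) q'"
        using exist_seg[OF qm s0 s1] .
      thus ?thesis using lm by simp
    qed
    then obtain qt where qt: "qt \<in> \<Omega>" "geodesic_segment \<Omega> G p (t *\<^sub>R v) qt" by blast
    have lqt: "rlog \<Omega> G p qt = t *\<^sub>R v" by (rule log_eq[OF qt])
    have "rexp \<Omega> G p (t *\<^sub>R v) = qt" unfolding rexp_def
    proof (rule the_equality)
      show "geodesic_segment \<Omega> G p (t *\<^sub>R v) qt" by (rule qt(2))
    next
      fix q' assume q': "geodesic_segment \<Omega> G p (t *\<^sub>R v) q'"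
      have "q' \<in> \<Omega>" using seg_in[OF q'] .
      moreover have "rlog \<Omega> G p q' = t *\<^sub>R v" using log_eq[OF \<open>q' \<in> \<Omega>\<close> q'] .
      ultimately show "q' = qt" using INJ qt(1) lqt by metis
    qed
    moreover obtain c where c: "c > 0" "rlog \<Omega> G p qt = c *\<^sub>R (qt - p)" using Ppos[OF qt(1)] by blast
    have "qt = p + (t / c) *\<^sub>R v"
    proof -
      have "qt - p = (1 / c) *\<^sub>R (t *\<^sub>R v)" using c lqt by simp
      thus ?thesis by (simp add: algebra_simps)
    qed
    ultimately show ?thesis by blast
  qed
  ultimately show ?thesis by blast
qed

end

theorem proposition11p1:
  fixes \<Omega> :: "(real^'n) set" and G :: "real^'n \<Rightarrow> real^'n^'n"
  assumes "riemannian_metric \<Omega> G"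
    and "geodesically_convex \<Omega> G"
    and "affine_cut \<Omega> G"
  shows "\<forall>p\<in>\<Omega>. \<forall>v. v \<noteq> 0 \<longrightarrow>
           (\<exists>\<epsilon>>0. \<forall>t. \<bar>t\<bar> < \<epsilon> \<longrightarrow> (\<exists>s. rexp \<Omega> G p (t *\<^sub>R v) = p + s *\<^sub>R v))"
proof (intro ballI allI impI)
  fix p v assume p: "p \<in> \<Omega>" and v: "(v::real^'n) \<noteq> 0"
  show "\<exists>\<epsilon>>0. \<forall>t. \<bar>t\<bar> < \<epsilon> \<longrightarrow> (\<exists>s. rexp \<Omega> G p (t *\<^sub>R v) = p + s *\<^sub>R v)"
    by (rule main[OF assms p v])
qed

end
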